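(* Let $L\subset\mathbb{R}^{n+1}$ be an $(n+1)$-dimensional lattice with $|q|^2\in\mathbb{N}_0$ for all $q\in L$. The theta series $\Theta_L(x,w)$ satisfies the differential equation $$\big[\Delta_w-4\pi\omega\,\partial_s\big]\Theta_L(x,w)=0,$$ where $\Delta_w=\sum_{i=0}^n\frac{\partial^2}{\partial w_i^2}$ and $\partial_s$ is the slice derivative with respect to $x$.
   Context: $\mathbb{R}_n$ is the real Clifford algebra generated by $e_1,\dots,e_n$, $e_0=1$; paravectors $x=x_0+\underline{x}$ identified with $\mathbb{R}^{n+1}$; for $x\in H=\mathbb{R}^{n+1}\setminus\mathbb{R}$, $\omega=\underline{x}/\|\underline{x}\|\in\mathbb{S}^{n-1}$ ($\omega^2=-1$), $\mathbb{C}_\omega=\{u+\omega v\}$, and $w=\sum_{i=0}^ne_iw_i$ with $w_i\in\mathbb{C}_\omega$; $\langle q,w\rangle=\sum_iq_iw_i$. Lattice $L=\{\sum m_i\mathfrak{Q}_i: m_i\in\mathbb{Z}\}$. Slice monogenic functions $f(u+\omega v)=\alpha+\omega\beta$ with $(\alpha,\beta)$ satisfying the Cauchy–Riemann system; $*$-product $(\alpha+\omega\beta)*(\gamma+\omega\delta)=(\alpha\gamma-\beta\delta)+\omega(\beta\gamma+\alpha\delta)$; $\exp_*(f)=\sum_kf^{*k}/k!$. The slice derivative of $f=\alpha+\omega\beta$ is $\partial_sf(u+\omega v)=\partial_u\alpha(u,v)+\omega\partial_u\beta(u,v)$. $\Theta_L(x,w)=\sum_{q\in L}\exp_*\big((\pi|q|^2x+2\pi\langle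 q,w\rangle)\omega\big)$; the derivatives $\partial/\partial w_i$ are the complex derivatives in $w_i\in\mathbb{C}_\omega$. *)

theory Defs
  imports "HOL-Analysis.Analysis"
begin

text \<open>The ambient space R^{n+1} is modelled as real^'n for a finite index
type 'n (its n+1 coordinates indexed by 'n). On a fixed slice C_omega we identify
C_omega with the complex numbers via u + omega v |-> u + i v (omega |-> i); the
*-product of slice functions is then complex multiplication and exp_* is exp.
A point x = u + omega v of H has v = |x_vec| > 0.\<close>

definition lattice :: "('n::finite \<Rightarrow> real^'n) \<Rightarrow> (real^'n) set" where
  "lattice Q = {(\<Sum>i\<in>UNIV. real_of_int (m i) *\<^sub>R Q i) | m. True}"

definition pairing :: "real^'n::finite \<Rightarrow> complex^'n \<Rightarrow> complex" where
  "pairing q w = (\<Sum>i\<in>UNIV. complex_of_real (q $ i) * w $ i)"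

definition theta :: "(real^'n::finite) set \<Rightarrow> real \<Rightarrow> real \<Rightarrow> complex^'n \<Rightarrow> complex" where
  "theta L u v w = (\<Sum>\<^sub>\<infinity>q\<in>L.
     exp ((complex_of_real pi * complex_of_real ((norm q)\<^sup>2) * Complex u v
           + 2 * complex_of_real pi * pairing q w) * \<i>))"

text \<open>Slice derivative: d_s f (u + omega v) = d_u alpha + omega d_u beta, i.e. the
partial derivative in u of the C_omega-valued function.\<close>
definition slice_deriv :: "(real \<Rightarrow> real \<Rightarrow> complex) \<Rightarrow> real \<Rightarrow> real \<Rightarrow> complex" where
  "slice_deriv F u v = vector_derivative (\<lambda>t. F t v) (at u)"

definition partial_w :: "'n::finite \<Rightarrow> (complex^'n \<Rightarrow> complex) \<Rightarrow> complex^'n \<Rightarrow> complex" where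
  "partial_w i G w = deriv (\<lambda>\<zeta>. G (\<chi> j. if j = i then \<zeta> else w $ j)) (w $ i)"

definition laplace_w :: "(complex^'n::finite \<Rightarrow> complex) \<Rightarrow> complex^'n \<Rightarrow> complex" where
  "laplace_w G w = (\<Sum>i\<in>UNIV. partial_w i (partial_w i G) w)"

end

theory Submission
  imports Defs "HOL-Complex_Analysis.Cauchy_Integral_Formula"
begin


lemma int_exp_summable:
  fixes a :: real assumes a: "a > 0"
  shows "(\<lambda>j::int. exp (- a * \<bar>real_of_int j\<bar>)) summable_on UNIV"
proof -
  have g: "(\<lambda>n::nat. exp (- a * real n)) summable_on UNIV"
  proof (subst summable_on_UNIV_nonneg_real_iff)
    show "summable (\<lambda>n::nat. exp (- a * real n))"
      using summable_geometric[of "exp (-a)"] a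
      by (simp add: exp_of_nat_mult[symmetric] mult.commute)
  qed simp
  have 1: "(\<lambda>j::int. exp (- a * \<bar>real_of_int j\<bar>)) summable_on range int"
    by (subst summable_on_reindex) (use g in \<open>auto simp: o_def\<close>)
  have 2: "(\<lambda>j::int. exp (- a * \<bar>real_of_int j\<bar>)) summable_on range (\<lambda>n. - int n)"
    by (subst summable_on_reindex) (use g in \<open>auto simp: o_def inj_on_def\<close>)
  have "UNIV = range int \<union> range (\<lambda>n. - int n)"
    by (auto intro: int_cases2[of x for x] )
  then show ?thesis using summable_on_union[OF 1 2] by simp
qed

lemma lattice_exp_summable:
  fixes Q :: "'n::finite \<Rightarrow> real^'n"
  assumes injQ: "inj Q" and ind: "independent (range Q)"
  shows "(\<lambda>q. exp (- norm q)) summable_on lattice Q"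
proof -
  define Tr where "Tr x = (\<Sum>i\<in>UNIV. (x$i) *\<^sub>R Q i)" for x :: "real^'n"
  have lin: "linear Tr"
    by (rule linearI) (simp_all add: Tr_def scaleR_add_left sum.distrib scaleR_sum_right)
  have z: "x = 0" if "Tr x = 0" for x
  proof -
    define c where "c v = x $ (inv Q v)" for v
    have "(\<Sum>v\<in>range Q. c v *\<^sub>R v) = (\<Sum>i\<in>UNIV. c (Q i) *\<^sub>R Q i)"
      by (subst sum.reindex) (use injQ in auto)
    also have "\<dots> = Tr x" using injQ by (simp add: Tr_def c_def)
    finally have "(\<Sum>v\<in>range Q. c v *\<^sub>R v) = 0" using that by simp
    then have "\<forall>v\<in>range Q. c v = 0"
      using ind[unfolded eucl.independent_explicit, THEN conjunct2, rule_format] by blast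
    then show ?thesis using injQ by (simp add: c_def vec_eq_iff)
  qed
  have injT: "inj Tr"
    by (meson lin linear_inj_iff_eq_0 z) 
  obtain B where B: "B > 0" "\<And>x. B * norm x \<le> norm (Tr x)"
    using linear_inj_bounded_below_pos[OF lin injT] by blast
  define T where "T m = Tr (\<chi> i. real_of_int (m i))" for m :: "'n \<Rightarrow> int"
  have lat: "lattice Q = range T"
    by (auto simp: lattice_def T_def Tr_def)
  have injT2: "inj T"
  proof (rule injI)
    fix m m' assume "T m = T m'"
    then have "(\<chi> i. real_of_int (m i)) = (\<chi> i. real_of_int (m' i))"
      using injT unfolding T_def inj_def by blast
    then have "\<forall>i. real_of_int (m i) = real_of_int (m' i)" by (simp add: vec_eq_iff)
    then show "m = m'" by (simp add: fun_eq_iff)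
  qed
  define N where "N = real CARD('n)"
  have N: "N > 0" by (simp add: N_def)
  define f where "f i j = exp (- (B/N) * \<bar>real_of_int j\<bar>)" for i :: 'n and j :: int
  have fs: "Infinite_Set_Sum.abs_summable_on (f i) UNIV" for i
    unfolding abs_summable_equivalent[symmetric] f_def
    using int_exp_summable[of "B/N"] B N by simp
  have "Infinite_Set_Sum.abs_summable_on (\<lambda>g. \<Prod>x\<in>UNIV. f x (g x)) (PiE UNIV (\<lambda>_. UNIV))"
    by (rule abs_summable_on_prod_PiE) (use fs in auto)
  then have "Infinite_Sum.abs_summable_on (\<lambda>g. \<Prod>x\<in>UNIV. f x (g x)) (PiE UNIV (\<lambda>_. UNIV))"
    by (rule abs_summable_equivalent[THEN iffD2])
  moreover have "PiE UNIV (\<lambda>_::'n. UNIV::int set) = UNIV" by (auto simp: PiE_UNIV_domain)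
  ultimately have P: "(\<lambda>g. \<Prod>x\<in>UNIV. f x (g x)) summable_on UNIV"
    using abs_summable_summable by metis
  have bnd: "exp (- norm (T m)) \<le> (\<Prod>x\<in>UNIV. f x (m x))" for m
  proof -
    have "(\<Sum>i\<in>UNIV. \<bar>real_of_int (m i)\<bar>) \<le> (\<Sum>i\<in>(UNIV::'n set). norm (\<chi> i. real_of_int (m i)))"
      by (intro sum_mono) (metis component_le_norm_cart vec_lambda_beta)
    also have "\<dots> = N * norm (\<chi> i. real_of_int (m i))" by (simp add: N_def)
    finally have "(B/N) * (\<Sum>i\<in>UNIV. \<bar>real_of_int (m i)\<bar>) \<le> B * norm (\<chi> i. real_of_int (m i))"
      using N B by (simp add: field_simps)
    also have "\<dots> \<le> norm (T m)" using B(2) by (simp add: T_def)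
    finally have "- norm (T m) \<le> (\<Sum>i\<in>UNIV. - (B/N) * \<bar>real_of_int (m i)\<bar>)"
      by (simp add: sum_distrib_left sum_negf)
    then show ?thesis by (simp add: f_def exp_sum[symmetric])
  qed
  have "(\<lambda>m. exp (- norm (T m))) summable_on UNIV"
    by (rule summable_on_comparison_test[OF P]) (use bnd in auto)
  then show ?thesis unfolding lat
    by (subst summable_on_reindex) (use injT2 in \<open>auto simp: o_def\<close>)
qed




lemma mtest_ulim:
  fixes h :: "'a \<Rightarrow> complex \<Rightarrow> complex" and M :: "'a \<Rightarrow> real"
  assumes M: "M summable_on S" and b: "\<And>q x. q\<in>S \<Longrightarrow> x\<in>K \<Longrightarrow> norm (h q x) \<le> M q"
  shows "uniform_limit K (\<lambda>X x. \<Sum>q\<in>X. h q x) (\<lambda>x. infsum (\<lambda>q. h q x) S) (finite_subsets_at_top S)"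
proof (rule uniform_limitI)
  fix e :: real assume e: "e > 0"
  have summ: "(\<lambda>q. h q x) summable_on T" if "x \<in> K" "T \<subseteq> S" for x T
  proof -
    have "M summable_on T" using summable_on_subset[OF M that(2)] .
    then have "(\<lambda>q. norm (h q x)) summable_on T"
      by (rule Infinite_Sum.abs_summable_on_comparison_test') (use b that in auto)
    then show ?thesis by (rule Infinite_Sum.abs_summable_summable)
  qed
  have "(M has_sum infsum M S) S" using M by simp
  then have ev1: "\<forall>\<^sub>F X in finite_subsets_at_top S. dist (sum M X) (infsum M S) < e"
    unfolding has_sum_def using e tendsto_iff by blast
  have ev2: "\<forall>\<^sub>F X in finite_subsets_at_top S. finite X \<and> X \<subseteq> S" by auto
  show "\<forall>\<^sub>F X in finite_subsets_at_top S. \<forall>x\<in>K. dist (\<Sum>q\<in>X. h q x) (infsum (\<lambda>q. h q x) S) < e"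
    using ev1 ev2
  proof eventually_elim
    case (elim X)
    then have fin: "finite X" and XS: "X \<subseteq> S" by auto
    have SU: "S = X \<union> (S - X)" using XS by auto
    have MD: "M summable_on (S - X)" using summable_on_subset[OF M] by blast
    have "infsum M S = infsum M X + infsum M (S - X)"
      by (subst SU, rule infsum_Un_disjoint) (use fin MD in auto)
    then have tail: "infsum M (S - X) < e" using elim(1) fin
      by (simp add: dist_real_def)
    show ?case
    proof
      fix x assume x: "x \<in> K"
      have hD: "(\<lambda>q. h q x) summable_on (S - X)" using summ[OF x] by blast
      have "infsum (\<lambda>q. h q x) S = (\<Sum>q\<in>X. h q x) + infsum (\<lambda>q. h q x) (S - X)"
        by (subst SU, subst infsum_Un_disjoint) (use fin hD in auto)
      then have "dist (\<Sum>q\<in>X. h q x) (infsum (\<lambda>q. h q x) S) = norm (infsum (\<lambda>q. h q x) (S - X))"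
        by (simp add: dist_norm norm_minus_commute)
      also have "\<dots> \<le> infsum M (S - X)"
        by (rule norm_infsum_le[OF has_sum_infsum[OF hD] has_sum_infsum[OF MD]]) (use b x in auto)
      finally show "dist (\<Sum>q\<in>X. h q x) (infsum (\<lambda>q. h q x) S) < e" using tail by simp
    qed
  qed
qed

lemma infsum_field_deriv:
  fixes h h' :: "'a \<Rightarrow> complex \<Rightarrow> complex" and M :: "'a \<Rightarrow> real"
  assumes A: "open A" and z: "z \<in> A"
    and d: "\<And>q x. x \<in> A \<Longrightarrow> (h q has_field_derivative h' q x) (at x)"
    and r: "r > 0" "cball z r \<subseteq> A"
    and M: "M summable_on S" and b: "\<And>q x. q\<in>S \<Longrightarrow> x\<in>cball z r \<Longrightarrow> norm (h q x) \<le> M q"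
  shows "((\<lambda>x. infsum (\<lambda>q. h q x) S) has_field_derivative infsum (\<lambda>q. h' q z) S) (at z)"
    and "(\<lambda>q. h' q z) summable_on S"
proof -
  have ul: "uniform_limit (cball z r) (\<lambda>X x. \<Sum>q\<in>X. h q x) (\<lambda>x. infsum (\<lambda>q. h q x) S) (finite_subsets_at_top S)"
    by (rule mtest_ulim[OF M b])
  have ev: "\<forall>\<^sub>F X in finite_subsets_at_top S. continuous_on (cball z r) (\<lambda>x. \<Sum>q\<in>X. h q x) \<and>
      (\<forall>w\<in>ball z r. ((\<lambda>x. \<Sum>q\<in>X. h q x) has_field_derivative (\<Sum>q\<in>X. h' q w)) (at w))"
  proof (rule always_eventually, intro allI conjI ballI)
    fix X
    have dd: "((\<lambda>x. \<Sum>q\<in>X. h q x) has_field_derivative (\<Sum>q\<in>X. h' q w)) (at w)" if "w \<in> A" for w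
      by (rule DERIV_sum) (use d that in auto)
    show "continuous_on (cball z r) (\<lambda>x. \<Sum>q\<in>X. h q x)"
      by (rule continuous_at_imp_continuous_on) (use dd r(2) DERIV_isCont in blast)
    show "((\<lambda>x. \<Sum>q\<in>X. h q x) has_field_derivative (\<Sum>q\<in>X. h' q w)) (at w)" if "w \<in> ball z r" for w
      using dd that r(2) ball_subset_cball by blast
  qed
  obtain g' where g': "\<And>w. w \<in> ball z r \<Longrightarrow> ((\<lambda>x. infsum (\<lambda>q. h q x) S) has_field_derivative (g' w)) (at w)
       \<and> ((\<lambda>X. \<Sum>q\<in>X. h' q w) \<longlongrightarrow> g' w) (finite_subsets_at_top S)"
    using has_complex_derivative_uniform_limit[OF ev ul _ r(1)] by auto
  have zb: "z \<in> ball z r" using r by simp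
  have hs: "((\<lambda>q. h' q z) has_sum g' z) S" using g'[OF zb] unfolding has_sum_def by blast
  then show "(\<lambda>q. h' q z) summable_on S" by (rule has_sum_imp_summable)
  have "infsum (\<lambda>q. h' q z) S = g' z" using hs by (simp add: infsumI)
  then show "((\<lambda>x. infsum (\<lambda>q. h q x) S) has_field_derivative infsum (\<lambda>q. h' q z) S) (at z)"
    using g'[OF zb] by simp
qed

lemma quad_bound:
  fixes a b t :: real assumes a: "a > 0"
  shows "- a * t^2 + b * t \<le> b^2 / (4 * a)"
proof -
  have "0 \<le> a * (t - b / (2*a))^2" using a by simp
  also have "\<dots> = a * t^2 - b * t + b^2 / (4 * a)" using a
    by (simp add: power2_eq_square field_simps)
  finally show ?thesis by simp
qed




definition E :: "real^'n::finite \<Rightarrow> complex \<Rightarrow> complex^'n \<Rightarrow> complex" where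
  "E q z w = exp ((complex_of_real pi * complex_of_real ((norm q)\<^sup>2) * z
           + 2 * complex_of_real pi * pairing q w) * \<i>)"

lemma theta_E: "theta L u v w = infsum (\<lambda>q. E q (Complex u v) w) L"
  by (simp add: theta_def E_def)

lemma pairing_bound: "norm (pairing q w) \<le> norm q * (\<Sum>j\<in>UNIV. norm (w$j))"
proof -
  have "norm (pairing q w) \<le> (\<Sum>j\<in>UNIV. norm (complex_of_real (q $ j) * w $ j))"
    unfolding pairing_def by (rule norm_sum)
  also have "\<dots> \<le> (\<Sum>j\<in>UNIV. norm q * norm (w$j))"
    by (intro sum_mono) (simp add: norm_mult mult_right_mono component_le_norm_cart)
  finally show ?thesis by (simp add: sum_distrib_left)
qed

lemma norm_E: "norm (E q z w) \<le> exp (- pi * Im z * (norm q)\<^sup>2 + 2 * pi * (\<Sum>j\<in>UNIV. norm (w$j)) * norm q)"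
proof -
  have "norm (E q z w) = exp (- pi * Im z * (norm q)\<^sup>2 - 2 * pi * Im (pairing q w))"
    by (simp add: E_def norm_exp_eq_Re algebra_simps)
  moreover have im: "- Im (pairing q w) \<le> norm q * (\<Sum>j\<in>UNIV. norm (w$j))"
    using pairing_bound[of q w] abs_Im_le_cmod[of "pairing q w"] by linarith
  have "pi * (- Im (pairing q w)) \<le> pi * (norm q * (\<Sum>j\<in>UNIV. norm (w$j)))"
    by (rule mult_left_mono[OF im]) (rule pi_ge_zero)
  then have "- pi * Im (pairing q w) \<le> pi * (norm q * (\<Sum>j\<in>UNIV. norm (w$j)))"
    by simp
  ultimately show ?thesis by (simp add: algebra_simps)
qed

lemma gauss_summable:
  fixes Q :: "'n::finite \<Rightarrow> real^'n"
  assumes injQ: "inj Q" and ind: "independent (range Q)" and y: "y > 0"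
  shows "(\<lambda>q. (1 + norm q)^k * exp (- pi * y * (norm q)\<^sup>2 + 2 * pi * \<beta> * norm q)) summable_on lattice Q"
proof -
  define C where "C = (2 * pi * \<beta> + real k + 1)\<^sup>2 / (4 * (pi * y))"
  have b: "(1 + t)^k * exp (- pi * y * t\<^sup>2 + 2 * pi * \<beta> * t) \<le> exp C * exp (- t)" if t: "t \<ge> 0" for t :: real
  proof -
    have "(1 + t)^k \<le> (exp t)^k"
      by (rule power_mono) (use t exp_ge_add_one_self[of t] in auto)
    also have "\<dots> = exp (real k * t)" by (simp add: exp_of_nat_mult)
    finally have 1: "(1 + t)^k * exp (- pi * y * t\<^sup>2 + 2 * pi * \<beta> * t)
        \<le> exp (real k * t) * exp (- pi * y * t\<^sup>2 + 2 * pi * \<beta> * t)"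
      by (rule mult_right_mono) simp
    have "- (pi * y) * t\<^sup>2 + (2 * pi * \<beta> + real k + 1) * t \<le> C"
      unfolding C_def by (rule quad_bound) (use y in simp)
    then have "real k * t + (- pi * y * t\<^sup>2 + 2 * pi * \<beta> * t) \<le> C + - t"
      by (simp add: algebra_simps)
    then have "exp (real k * t) * exp (- pi * y * t\<^sup>2 + 2 * pi * \<beta> * t) \<le> exp C * exp (- t)"
      by (simp add: exp_add[symmetric])
    with 1 show ?thesis by linarith
  qed
  have "(\<lambda>q. exp C * exp (- norm q)) summable_on lattice Q"
    by (rule summable_on_cmult_right, rule lattice_exp_summable[OF injQ ind])
  then show ?thesis
    by (rule summable_on_comparison_test) (use b in auto)
qed




lemma E_z_deriv: "((\<lambda>z. E q z w) has_field_derivative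
    E q z w * (complex_of_real pi * complex_of_real ((norm q)\<^sup>2) * \<i>)) (at z)"
  unfolding E_def by (rule derivative_eq_intros refl | simp add: algebra_simps)+

lemma theta_z_deriv:
  fixes Q :: "'n::finite \<Rightarrow> real^'n"
  assumes injQ: "inj Q" and ind: "independent (range Q)" and z: "Im z > 0"
  shows "((\<lambda>z. infsum (\<lambda>q. E q z w) (lattice Q)) has_field_derivative
     infsum (\<lambda>q. E q z w * (complex_of_real pi * complex_of_real ((norm q)\<^sup>2) * \<i>)) (lattice Q)) (at z)"
proof -
  define \<beta> where "\<beta> = (\<Sum>j\<in>UNIV. norm (w$j))"
  define M where "M q = (1 + norm q)^0 * exp (- pi * (Im z / 2) * (norm q)\<^sup>2 + 2 * pi * \<beta> * norm q)" for q :: "real^'n"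
  have Ms: "M summable_on lattice Q" unfolding M_def
    by (rule gauss_summable[OF injQ ind]) (use z in simp)
  have sub: "cball z (Im z / 2) \<subseteq> {x. Im x > 0}"
  proof
    fix x assume "x \<in> cball z (Im z / 2)"
    then have "cmod (z - x) \<le> Im z / 2" by (simp add: dist_norm)
    moreover have "Im z - Im x \<le> cmod (z - x)" using abs_Im_le_cmod[of "z - x"] by simp
    ultimately show "x \<in> {x. Im x > 0}" using z by simp
  qed
  have bnd: "norm (E q x w) \<le> M q" if "x \<in> cball z (Im z / 2)" for q x
  proof -
    have "cmod (z - x) \<le> Im z / 2" using that by (simp add: dist_norm)
    moreover have "Im z - Im x \<le> cmod (z - x)" using abs_Im_le_cmod[of "z - x"] by simp
    ultimately have "Im z / 2 \<le> Im x" by simp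
    then have "pi * (Im z / 2) * (norm q)\<^sup>2 \<le> pi * Im x * (norm q)\<^sup>2"
      by (intro mult_right_mono mult_left_mono) auto
    then have "exp (- pi * Im x * (norm q)\<^sup>2 + 2 * pi * \<beta> * norm q) \<le> M q"
      unfolding M_def by simp
    then show ?thesis using norm_E[of q x w] unfolding \<beta>_def by linarith
  qed
  show ?thesis
    by (rule infsum_field_deriv(1)[OF _ _ E_z_deriv _ sub Ms bnd])
       (use z in \<open>auto intro: open_halfspace_Im_gt\<close>)
qed

definition upd :: "complex^'n::finite \<Rightarrow> 'n \<Rightarrow> complex \<Rightarrow> complex^'n" where
  "upd w i \<zeta> = (\<chi> j. if j = i then \<zeta> else w$j)"

lemma upd_upd[simp]: "upd (upd w i a) i b = upd w i b"
  and upd_same[simp]: "upd w i (w$i) = w"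
  and upd_nth[simp]: "upd w i a $ i = a"
  by (simp_all add: upd_def vec_eq_iff)

lemma pairing_upd: "pairing q (upd w i \<zeta>) = pairing q w + complex_of_real (q$i) * (\<zeta> - w$i)"
proof -
  have "pairing q (upd w i \<zeta>) - pairing q w
      = (\<Sum>j\<in>UNIV. complex_of_real (q$j) * (upd w i \<zeta> $ j - w$j))"
    by (simp add: pairing_def sum_subtractf right_diff_distrib)
  also have "\<dots> = (\<Sum>j\<in>UNIV. if j = i then complex_of_real (q$i) * (\<zeta> - w$i) else 0)"
    by (rule sum.cong) (auto simp: upd_def)
  also have "\<dots> = complex_of_real (q$i) * (\<zeta> - w$i)" by simp
  finally show ?thesis by (simp add: algebra_simps)
qed

definition cc :: "real^'n::finite \<Rightarrow> 'n \<Rightarrow> complex" where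
  "cc q i = 2 * complex_of_real pi * complex_of_real (q$i) * \<i>"

lemma E_w_deriv: "((\<lambda>\<zeta>. cc q i ^ k * E q z (upd w i \<zeta>)) has_field_derivative
   cc q i ^ Suc k * E q z (upd w i \<zeta>)) (at \<zeta>)"
  unfolding E_def pairing_upd cc_def
  by (rule derivative_eq_intros refl | simp add: algebra_simps)+

lemma upd_norm_sum: "(\<Sum>j\<in>UNIV. norm (upd w i \<zeta> $ j)) \<le> (\<Sum>j\<in>UNIV. norm (w$j)) + norm \<zeta>"
proof -
  have "(\<Sum>j\<in>UNIV. norm (upd w i \<zeta> $ j)) \<le> (\<Sum>j\<in>UNIV. norm (w$j) + (if j = i then norm \<zeta> else 0))"
    by (rule sum_mono) (auto simp: upd_def)
  also have "\<dots> = (\<Sum>j\<in>UNIV. norm (w$j)) + norm \<zeta>" by (simp add: sum.distrib)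
  finally show ?thesis .
qed

lemma theta_w_deriv:
  fixes Q :: "'n::finite \<Rightarrow> real^'n"
  assumes injQ: "inj Q" and ind: "independent (range Q)" and z: "Im z > 0"
  shows "((\<lambda>\<zeta>. infsum (\<lambda>q. cc q i ^ k * E q z (upd w i \<zeta>)) (lattice Q)) has_field_derivative
     infsum (\<lambda>q. cc q i ^ Suc k * E q z (upd w i \<zeta>0)) (lattice Q)) (at \<zeta>0)"
    and "(\<lambda>q. cc q i ^ Suc k * E q z (upd w i \<zeta>0)) summable_on (lattice Q)"
proof -
  define \<beta> where "\<beta> = (\<Sum>j\<in>UNIV. norm (w$j)) + norm \<zeta>0 + 1"
  define M where "M q = (2 * pi)^k * ((1 + norm q)^k * exp (- pi * Im z * (norm q)\<^sup>2 + 2 * pi * \<beta> * norm q))" for q :: "real^'n"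
  have Ms: "M summable_on lattice Q" unfolding M_def
    by (rule summable_on_cmult_right, rule gauss_summable[OF injQ ind]) (use z in simp)
  have bnd: "norm (cc q i ^ k * E q z (upd w i x)) \<le> M q" if "x \<in> cball \<zeta>0 1" for q x
  proof -
    have "norm x \<le> norm \<zeta>0 + 1" using that norm_triangle_sub[of x \<zeta>0]
      by (simp add: dist_norm norm_minus_commute)
    then have "(\<Sum>j\<in>UNIV. norm (upd w i x $ j)) \<le> \<beta>"
      using upd_norm_sum[of w i x] unfolding \<beta>_def by linarith
    then have "2 * pi * (\<Sum>j\<in>UNIV. norm (upd w i x $ j)) * norm q \<le> 2 * pi * \<beta> * norm q"
      by (intro mult_right_mono mult_left_mono) auto
    then have e: "norm (E q z (upd w i x)) \<le> exp (- pi * Im z * (norm q)\<^sup>2 + 2 * pi * \<beta> * norm q)"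
      using norm_E[of q z "upd w i x"] by (smt (verit) exp_le_cancel_iff)
    have "norm (cc q i) = 2 * pi * \<bar>q$i\<bar>" by (simp add: cc_def norm_mult)
    also have "\<dots> \<le> 2 * pi * (1 + norm q)"
      using component_le_norm_cart[of q i] by simp
    finally have "norm (cc q i) ^ k \<le> (2 * pi * (1 + norm q)) ^ k"
      by (rule power_mono) simp
    then have c: "norm (cc q i ^ k) \<le> (2 * pi)^k * (1 + norm q)^k"
      by (simp add: norm_power power_mult_distrib)
    have "norm (cc q i ^ k * E q z (upd w i x)) = norm (cc q i ^ k) * norm (E q z (upd w i x))"
      by (simp add: norm_mult)
    also have "\<dots> \<le> ((2 * pi)^k * (1 + norm q)^k) * exp (- pi * Im z * (norm q)\<^sup>2 + 2 * pi * \<beta> * norm q)"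
      by (rule mult_mono[OF c e]) auto
    finally show ?thesis by (simp add: M_def mult.assoc)
  qed
  show "((\<lambda>\<zeta>. infsum (\<lambda>q. cc q i ^ k * E q z (upd w i \<zeta>)) (lattice Q)) has_field_derivative
     infsum (\<lambda>q. cc q i ^ Suc k * E q z (upd w i \<zeta>0)) (lattice Q)) (at \<zeta>0)"
    by (rule infsum_field_deriv(1)[where A=UNIV and r=1, OF _ _ E_w_deriv _ _ Ms bnd]) auto
  show "(\<lambda>q. cc q i ^ Suc k * E q z (upd w i \<zeta>0)) summable_on (lattice Q)"
    by (rule infsum_field_deriv(2)[where A=UNIV and r=1, OF _ _ E_w_deriv _ _ Ms bnd]) auto
qed




lemma infsum_sum_swap:
  fixes f :: "'i \<Rightarrow> 'a \<Rightarrow> complex"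
  assumes "finite I" "\<And>i. i \<in> I \<Longrightarrow> f i summable_on S"
  shows "(\<lambda>q. \<Sum>i\<in>I. f i q) summable_on S \<and> (\<Sum>i\<in>I. infsum (f i) S) = infsum (\<lambda>q. \<Sum>i\<in>I. f i q) S"
  using assms
proof (induction I rule: finite_induct)
  case empty then show ?case by simp
next
  case (insert x F)
  then have IH: "(\<lambda>q. \<Sum>i\<in>F. f i q) summable_on S" "(\<Sum>i\<in>F. infsum (f i) S) = infsum (\<lambda>q. \<Sum>i\<in>F. f i q) S"
    by auto
  have fx: "f x summable_on S" using insert by auto
  show ?case using insert(1,2) IH fx
    by (simp add: summable_on_add infsum_add)
qed

lemma Complex_vd: "((\<lambda>t. Complex t v) has_vector_derivative 1) (at u)"
  unfolding Complex_eq by (auto intro!: derivative_eq_intros)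

lemma partial_w_upd: "partial_w i G w = deriv (\<lambda>\<zeta>. G (upd w i \<zeta>)) (w$i)"
  by (simp add: partial_w_def upd_def)

lemma norm_sq_sum: "complex_of_real ((norm q)\<^sup>2) = (\<Sum>i\<in>UNIV. complex_of_real ((q$i)\<^sup>2))"
proof -
  have "(norm q)\<^sup>2 = (\<Sum>i\<in>UNIV. (q$i)\<^sup>2)"
    unfolding power2_norm_eq_inner inner_vec_def by (simp add: power2_eq_square)
  then show ?thesis by simp
qed

theorem mainTheorem8:
  fixes Q :: "'n::finite \<Rightarrow> real^'n"
  assumes basis: "inj Q" "independent (range Q)"
    and integral: "\<forall>q\<in>lattice Q. \<exists>k::nat. (norm q)\<^sup>2 = real k"
    and v_pos: "v > 0"
  shows "laplace_w (\<lambda>w'. theta (lattice Q) u v w') w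
           - 4 * complex_of_real pi * \<i> * slice_deriv (\<lambda>u' v'. theta (lattice Q) u' v' w) u v = 0"
proof -
  define L where "L = lattice Q"
  define z where "z = Complex u v"
  have zI: "Im z > 0" using v_pos by (simp add: z_def)
  define G where "G = (\<lambda>w'. theta L u v w')"
  have G: "G w' = infsum (\<lambda>q. E q z w') L" for w' by (simp add: G_def theta_E z_def)
  have A: "partial_w i G (upd w i \<zeta>) = infsum (\<lambda>q. cc q i ^ Suc 0 * E q z (upd w i \<zeta>)) L" for i \<zeta>
  proof -
    have "((\<lambda>\<zeta>. infsum (\<lambda>q. cc q i ^ 0 * E q z (upd w i \<zeta>)) L) has_field_derivative
       infsum (\<lambda>q. cc q i ^ Suc 0 * E q z (upd w i \<zeta>)) L) (at \<zeta>)"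
      unfolding L_def by (rule theta_w_deriv(1)[OF basis zI])
    then have "((\<lambda>\<zeta>. G (upd w i \<zeta>)) has_field_derivative
       infsum (\<lambda>q. cc q i ^ Suc 0 * E q z (upd w i \<zeta>)) L) (at \<zeta>)"
      by (simp add: G)
    then show ?thesis by (simp add: partial_w_upd DERIV_imp_deriv)
  qed
  have B: "partial_w i (partial_w i G) w = infsum (\<lambda>q. cc q i ^ 2 * E q z w) L"
    and Bs: "(\<lambda>q. cc q i ^ 2 * E q z w) summable_on L" for i
  proof -
    have "((\<lambda>\<zeta>. infsum (\<lambda>q. cc q i ^ Suc 0 * E q z (upd w i \<zeta>)) L) has_field_derivative
       infsum (\<lambda>q. cc q i ^ Suc (Suc 0) * E q z (upd w i (w$i))) L) (at (w$i))"
      unfolding L_def by (rule theta_w_deriv(1)[OF basis zI])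
    then have "((\<lambda>\<zeta>. partial_w i G (upd w i \<zeta>)) has_field_derivative
       infsum (\<lambda>q. cc q i ^ 2 * E q z w) L) (at (w$i))"
      by (simp add: A numeral_2_eq_2)
    then show "partial_w i (partial_w i G) w = infsum (\<lambda>q. cc q i ^ 2 * E q z w) L"
      by (simp add: partial_w_upd[of i "partial_w i G"] DERIV_imp_deriv)
    have "(\<lambda>q. cc q i ^ Suc (Suc 0) * E q z (upd w i (w$i))) summable_on L"
      unfolding L_def by (rule theta_w_deriv(2)[OF basis zI])
    then show "(\<lambda>q. cc q i ^ 2 * E q z w) summable_on L" by (simp add: numeral_2_eq_2)
  qed
  have lap: "laplace_w G w = infsum (\<lambda>q. - (4 * complex_of_real pi ^ 2 * complex_of_real ((norm q)\<^sup>2)) * E q z w) L"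
  proof -
    have "laplace_w G w = (\<Sum>i\<in>UNIV. infsum (\<lambda>q. cc q i ^ 2 * E q z w) L)"
      by (simp add: laplace_w_def B)
    also have "\<dots> = infsum (\<lambda>q. \<Sum>i\<in>UNIV. cc q i ^ 2 * E q z w) L"
      using infsum_sum_swap[of UNIV "\<lambda>i q. cc q i ^ 2 * E q z w" L] Bs by simp
    also have "\<dots> = infsum (\<lambda>q. - (4 * complex_of_real pi ^ 2 * complex_of_real ((norm q)\<^sup>2)) * E q z w) L"
    proof (rule infsum_cong)
      fix q
      have "(\<Sum>i\<in>UNIV. cc q i ^ 2 * E q z w) = (\<Sum>i\<in>UNIV. - (4 * complex_of_real pi ^ 2 * complex_of_real ((q$i)\<^sup>2)) * E q z w)"
        by (rule sum.cong) (simp_all add: cc_def power_mult_distrib)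
      also have "\<dots> = - (4 * complex_of_real pi ^ 2 * complex_of_real ((norm q)\<^sup>2)) * E q z w"
        unfolding norm_sq_sum by (simp add: sum_distrib_left sum_distrib_right sum_negf)
      finally show "(\<Sum>i\<in>UNIV. cc q i ^ 2 * E q z w) = - (4 * complex_of_real pi ^ 2 * complex_of_real ((norm q)\<^sup>2)) * E q z w" .
    qed
    finally show ?thesis .
  qed
  have sd: "slice_deriv (\<lambda>u' v'. theta L u' v' w) u v
      = infsum (\<lambda>q. E q z w * (complex_of_real pi * complex_of_real ((norm q)\<^sup>2) * \<i>)) L"
  proof -
    have "(((\<lambda>z. infsum (\<lambda>q. E q z w) L) \<circ> (\<lambda>t. Complex t v)) has_vector_derivative
        1 * infsum (\<lambda>q. E q z w * (complex_of_real pi * complex_of_real ((norm q)\<^sup>2) * \<i>)) L) (at u)"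
      by (rule field_vector_diff_chain_at[OF Complex_vd])
         (use theta_z_deriv[OF basis zI] in \<open>simp add: z_def L_def\<close>)
    then have "((\<lambda>t. theta L t v w) has_vector_derivative
        infsum (\<lambda>q. E q z w * (complex_of_real pi * complex_of_real ((norm q)\<^sup>2) * \<i>)) L) (at u)"
      by (simp add: o_def theta_E)
    then show ?thesis unfolding slice_deriv_def by (rule vector_derivative_at)
  qed
  have "4 * complex_of_real pi * \<i> * slice_deriv (\<lambda>u' v'. theta L u' v' w) u v
      = infsum (\<lambda>q. 4 * complex_of_real pi * \<i> * (E q z w * (complex_of_real pi * complex_of_real ((norm q)\<^sup>2) * \<i>))) L"
    unfolding sd by (rule infsum_cmult_right'[symmetric])
  also have "\<dots> = infsum (\<lambda>q. - (4 * complex_of_real pi ^ 2 * complex_of_real ((norm q)\<^sup>2)) * E q z w) L"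
    by (rule infsum_cong) (simp add: power2_eq_square algebra_simps)
  finally have "4 * complex_of_real pi * \<i> * slice_deriv (\<lambda>u' v'. theta L u' v' w) u v = laplace_w G w"
    using lap by simp
  then show ?thesis by (simp add: G_def L_def)
qed


end
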